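(* Let $n,t$ be integers with $4\leq t\leq \frac{n+2}{2}$, and let $T_n^*$ be any tree of the form described below with these $n,t$. Then $\kappa^1(T_n^* )=n-t$.
   Context: For a connected graph $G=(V,E)$: a set $F\subseteq V$ is a $1$-good-neighbor faulty set if every vertex of $V-F$ has at least one neighbor in $V-F$; a $1$-good-neighbor cut is such an $F$ with $G-F$ disconnected; $\kappa^1(G)$ is the minimum cardinality of a $1$-good-neighbor cut. The tree $T_n^*$: let $K_{1,n-t-1}$ be a star with center $v$ and leaves $u_1,\dots,u_{n-t-1}$; let $r\ge 2$ and $a_1,\dots,a_r\ge 2$ be integers with $\sum_{i=1}^r a_i=t$, and let $K_{1,a_1-1},\dots,K_{1,a_r-1}$ be pairwise disjoint stars (disjoint from the first) with centers $w_1,\dots,w_r$; $T_n^*$ is the tree of order $n$ obtained by adding the edges $vw_1,\dots,vw_r$. *)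

theory Defs
  imports Main
begin

text \<open>A (simple, undirected) graph is given by a vertex set V and a symmetric
adjacency relation E on V.\<close>

definition connected_set :: "('a \<Rightarrow> 'a \<Rightarrow> bool) \<Rightarrow> 'a set \<Rightarrow> bool" where
  "connected_set E S \<longleftrightarrow>
     (\<forall>x\<in>S. \<forall>y\<in>S. (\<lambda>u w. u \<in> S \<and> w \<in> S \<and> E u w)\<^sup>*\<^sup>* x y)"

definition disconnected_after :: "'a set \<Rightarrow> ('a \<Rightarrow> 'a \<Rightarrow> bool) \<Rightarrow> 'a set \<Rightarrow> bool" where
  "disconnected_after V E F \<longleftrightarrow> \<not> connected_set E (V - F) \<and> V - F \<noteq> {}"

definition good_neighbor1_faulty :: "'a set \<Rightarrow> ('a \<Rightarrow> 'a \<Rightarrow> bool) \<Rightarrow> 'a set \<Rightarrow> bool" where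
  "good_neighbor1_faulty V E F \<longleftrightarrow>
     F \<subseteq> V \<and> (\<forall>x\<in>V - F. \<exists>y\<in>V - F. E x y)"

definition good_neighbor1_cut :: "'a set \<Rightarrow> ('a \<Rightarrow> 'a \<Rightarrow> bool) \<Rightarrow> 'a set \<Rightarrow> bool" where
  "good_neighbor1_cut V E F \<longleftrightarrow>
     good_neighbor1_faulty V E F \<and> disconnected_after V E F"

definition kappa1 :: "'a set \<Rightarrow> ('a \<Rightarrow> 'a \<Rightarrow> bool) \<Rightarrow> nat" where
  "kappa1 V E = (LEAST k. \<exists>F. good_neighbor1_cut V E F \<and> card F = k)"

text \<open>The tree T_n^*. Vertices: centre v, leaves u_1..u_{n-t-1} of v,
centres w_1..w_r, and leaves Lv i j (j = 1..a_i - 1) of w_i.\<close>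
datatype tvert = Cv | Uv nat | Wv nat | Lv nat nat

definition tstar_V :: "nat \<Rightarrow> nat \<Rightarrow> nat \<Rightarrow> (nat \<Rightarrow> nat) \<Rightarrow> tvert set" where
  "tstar_V n t r a = {Cv} \<union> Uv ` {1..n - t - 1} \<union> Wv ` {1..r}
     \<union> {Lv i j | i j. i \<in> {1..r} \<and> j \<in> {1..a i - 1}}"

definition tstar_edge0 :: "nat \<Rightarrow> nat \<Rightarrow> nat \<Rightarrow> (nat \<Rightarrow> nat) \<Rightarrow> tvert \<Rightarrow> tvert \<Rightarrow> bool" where
  "tstar_edge0 n t r a x y \<longleftrightarrow>
     (x = Cv \<and> (\<exists>k\<in>{1..n - t - 1}. y = Uv k)) \<or>
     (x = Cv \<and> (\<exists>i\<in>{1..r}. y = Wv i)) \<or>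
     (\<exists>i\<in>{1..r}. \<exists>j\<in>{1..a i - 1}. x = Wv i \<and> y = Lv i j)"

definition tstar_E :: "nat \<Rightarrow> nat \<Rightarrow> nat \<Rightarrow> (nat \<Rightarrow> nat) \<Rightarrow> tvert \<Rightarrow> tvert \<Rightarrow> bool" where
  "tstar_E n t r a x y \<longleftrightarrow> tstar_edge0 n t r a x y \<or> tstar_edge0 n t r a y x"

end

theory Submission
  imports Defs
begin

lemma finV: "finite (tstar_V n t r a)"
proof -
  have "{Lv i j | i j. i \<in> {1..r} \<and> j \<in> {1..a i - 1}} = (\<lambda>(i,j). Lv i j) ` (SIGMA i:{1..r}. {1..a i - 1})"
    by auto
  then show ?thesis unfolding tstar_V_def by simp
qed

lemma lower:
  assumes cut: "good_neighbor1_cut (tstar_V n t r a) (tstar_E n t r a) F"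
  shows "{Cv} \<union> Uv ` {1..n - t - 1} \<subseteq> F"
proof -
  let ?V = "tstar_V n t r a" and ?E = "tstar_E n t r a"
  let ?R = "\<lambda>u w. u \<in> ?V - F \<and> w \<in> ?V - F \<and> ?E u w"
  have sub: "F \<subseteq> ?V" and gn: "\<forall>x\<in>?V - F. \<exists>y\<in>?V - F. ?E x y"
    and dis: "\<not> connected_set ?E (?V - F)"
    using cut unfolding good_neighbor1_cut_def good_neighbor1_faulty_def disconnected_after_def by auto
  have CvF: "Cv \<in> F"
  proof (rule ccontr)
    assume nC: "Cv \<notin> F"
    have CV: "Cv \<in> ?V" unfolding tstar_V_def by auto
    have both: "?R\<^sup>*\<^sup>* x Cv \<and> ?R\<^sup>*\<^sup>* Cv x" if x: "x \<in> ?V - F" for x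
    proof (cases x)
      case Cv then show ?thesis by auto
    next
      case (Uv k)
      with x have "k \<in> {1..n - t - 1}" unfolding tstar_V_def by auto
      then have "?R x Cv" "?R Cv x" using x nC CV Uv
        unfolding tstar_E_def tstar_edge0_def by auto
      then show ?thesis by auto
    next
      case (Wv i)
      with x have "i \<in> {1..r}" unfolding tstar_V_def by auto
      then have "?R x Cv" "?R Cv x" using x nC CV Wv
        unfolding tstar_E_def tstar_edge0_def by auto
      then show ?thesis by auto
    next
      case (Lv i j)
      with x have ij: "i \<in> {1..r}" "j \<in> {1..a i - 1}" unfolding tstar_V_def by auto
      from gn x obtain y where y: "y \<in> ?V - F" "?E x y" by blast
      then have "y = Wv i" using Lv unfolding tstar_E_def tstar_edge0_def by auto
      with y ij have e1: "?R x (Wv i)" and e2: "?R (Wv i) x" and e3: "?R (Wv i) Cv" and e4: "?R Cv (Wv i)" using x nC CV Lv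
        unfolding tstar_E_def tstar_edge0_def by auto
      have a1: "?R\<^sup>*\<^sup>* x Cv" using converse_rtranclp_into_rtranclp[where r="?R", OF e1 r_into_rtranclp[where r="?R", OF e3]] .
      have a2: "?R\<^sup>*\<^sup>* Cv x" using converse_rtranclp_into_rtranclp[where r="?R", OF e4 r_into_rtranclp[where r="?R", OF e2]] .
      show ?thesis using a1 a2 by blast
    qed
    have "connected_set ?E (?V - F)"
      unfolding connected_set_def
    proof (intro ballI)
      fix x y assume "x \<in> ?V - F" "y \<in> ?V - F"
      then show "?R\<^sup>*\<^sup>* x y" using both by (meson rtranclp_trans)
    qed
    with dis show False by blast
  qed
  have "Uv k \<in> F" if k: "k \<in> {1..n - t - 1}" for k
  proof (rule ccontr)
    assume "Uv k \<notin> F"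
    then have "Uv k \<in> ?V - F" using k unfolding tstar_V_def by auto
    with gn obtain y where y: "y \<in> ?V - F" "?E (Uv k) y" by blast
    then have "y = Cv" unfolding tstar_E_def tstar_edge0_def by auto
    with y CvF show False by auto
  qed
  with CvF show ?thesis by auto
qed

theorem lemma3p1:
  fixes n t r :: nat and a :: "nat \<Rightarrow> nat"
  assumes "4 \<le> t" and "2 * t \<le> n + 2"
    and "r \<ge> 2" and "\<forall>i\<in>{1..r}. a i \<ge> 2" and "(\<Sum>i=1..r. a i) = t"
  shows "kappa1 (tstar_V n t r a) (tstar_E n t r a) = n - t"
proof -
  let ?V = "tstar_V n t r a" and ?E = "tstar_E n t r a"
  define F0 where "F0 = {Cv} \<union> Uv ` {1..n - t - 1}"
  let ?R = "\<lambda>u w. u \<in> ?V - F0 \<and> w \<in> ?V - F0 \<and> ?E u w"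
  have cardF0: "card F0 = n - t"
  proof -
    have "card (Uv ` {1..n - t - 1}) = n - t - 1" by (simp add: card_image inj_on_def)
    moreover have "Cv \<notin> Uv ` {1..n - t - 1}" by auto
    ultimately show ?thesis unfolding F0_def using assms(1,2) by simp
  qed
  have cut: "good_neighbor1_cut ?V ?E F0"
    unfolding good_neighbor1_cut_def good_neighbor1_faulty_def disconnected_after_def
  proof (intro conjI)
    show "F0 \<subseteq> ?V" unfolding F0_def tstar_V_def by auto
    show "\<forall>x\<in>?V - F0. \<exists>y\<in>?V - F0. ?E x y"
    proof
      fix x assume x: "x \<in> ?V - F0"
      then consider (W) i where "i \<in> {1..r}" "x = Wv i"
        | (L) i j where "i \<in> {1..r}" "j \<in> {1..a i - 1}" "x = Lv i j"
        unfolding tstar_V_def F0_def by auto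
      then show "\<exists>y\<in>?V - F0. ?E x y"
      proof cases
        case W
        then have "a i \<ge> 2" using assms(4) by auto
        then have "Lv i 1 \<in> ?V - F0" "?E x (Lv i 1)" using W
          unfolding tstar_V_def F0_def tstar_E_def tstar_edge0_def by auto
        then show ?thesis by blast
      next
        case L
        then have "Wv i \<in> ?V - F0" "?E x (Wv i)"
          unfolding tstar_V_def F0_def tstar_E_def tstar_edge0_def by auto
        then show ?thesis by blast
      qed
    qed
    have W1: "Wv 1 \<in> ?V - F0" and W2: "Wv 2 \<in> ?V - F0"
      using assms(3) unfolding tstar_V_def F0_def by auto
    have inv: "?R\<^sup>*\<^sup>* (Wv 1) y \<Longrightarrow> y = Wv 1 \<or> (\<exists>j. y = Lv 1 j)" for y
    proof (induction rule: rtranclp_induct)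
      case base then show ?case by simp
    next
      case (step y z)
      then show ?case unfolding tstar_E_def tstar_edge0_def F0_def by auto
    qed
    have "\<not> ?R\<^sup>*\<^sup>* (Wv 1) (Wv 2)" using inv by fastforce
    then show "\<not> connected_set ?E (?V - F0)" unfolding connected_set_def using W1 W2 by blast
    show "?V - F0 \<noteq> {}" using W1 by blast
  qed
  have low: "n - t \<le> card F" if "good_neighbor1_cut ?V ?E F" for F
  proof -
    have "F \<subseteq> ?V" using that unfolding good_neighbor1_cut_def good_neighbor1_faulty_def by auto
    then have "finite F" using finV finite_subset by blast
    moreover have "F0 \<subseteq> F" using lower[OF that] unfolding F0_def .
    ultimately show ?thesis using cardF0 card_mono by metis
  qed
  show ?thesis unfolding kappa1_def
  proof (rule Least_equality)
    show "\<exists>F. good_neighbor1_cut ?V ?E F \<and> card F = n - t" using cut cardF0 by blast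
  next
    fix k assume "\<exists>F. good_neighbor1_cut ?V ?E F \<and> card F = k"
    then show "n - t \<le> k" using low by blast
  qed
qed

end
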